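(* Let $S \subset \mathbb{R}^2$ be compact such that both $S$ and $S^\mathsf{c}$ satisfy the $r$-rolling condition, and let $\mathcal{X}_n=\{X_1,\ldots,X_n\}$ be independent and uniformly distributed on $S$. For any $\alpha>0$, there is a constant $A > 0$ depending only on $(\alpha,r,\operatorname{diam}(S))$ such that, for every $n\ge1$, with probability at least $1 - A e^{- n/A}$ there is no open ball of radius $\alpha$ with center in $S$ that contains no point of $\mathcal{X}_n$.
   Context: A set $T\subset\mathbb{R}^2$ satisfies the $r$-rolling condition ($r>0$) if for every $x \in \partial T$ there is an open ball $B$ of radius $r$ with $B \cap T = \emptyset$ and $x \in \partial B$. $S^\mathsf{c}=\mathbb{R}^2\setminus S$, $\operatorname{diam}(S)=\sup\{\|x-y\|:x,y\in S\}$. *)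

theory Defs
  imports "HOL-Probability.Probability"
begin

definition rolling_condition :: "real \<Rightarrow> (real^2) set \<Rightarrow> bool" where
  "rolling_condition r T \<longleftrightarrow>
     (\<forall>x\<in>frontier T. \<exists>c. ball c r \<inter> T = {} \<and> x \<in> frontier (ball c r))"

definition uniform_sample :: "(real^2) set \<Rightarrow> nat \<Rightarrow> (nat \<Rightarrow> real^2) measure" where
  "uniform_sample S n = PiM {..<n} (\<lambda>_. uniform_measure lborel S)"

end

theory Submission
  imports Defs
begin

lemma inner_ball:
  fixes S :: "(real^2) set"
  assumes roll: "rolling_condition r (- S)" and r: "r > 0" and b: "\<beta> > 0" and c: "c \<in> S"
  shows "\<exists>w. ball w (min r \<beta> / 8) \<subseteq> S \<inter> ball c \<beta>"
proof (cases "ball c (\<beta>/2) \<subseteq> S")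
  case True
  have "ball c (min r \<beta> / 8) \<subseteq> ball c (\<beta>/2)" using b r by (intro subset_ball) linarith
  with True show ?thesis using b by (intro exI[of _ c]) auto
next
  case False
  then obtain y where y: "y \<in> ball c (\<beta>/2)" "y \<notin> S" by blast
  have "ball c (\<beta>/2) \<inter> frontier S \<noteq> {}"
    proof (rule connected_Int_frontier)
    show "ball c (\<beta>/2) \<inter> S \<noteq> {}" using c b by (metis centre_in_ball disjoint_iff half_gt_zero)
  qed (use y in auto)
  then obtain y' where y': "y' \<in> ball c (\<beta>/2)" "y' \<in> frontier S" by auto
  then obtain z where z: "ball z r \<inter> - S = {}" "y' \<in> frontier (ball z r)"
    using roll unfolding rolling_condition_def by auto
  have dz: "dist z y' = r" using z(2) r by auto
  define \<rho> where "\<rho> = min r \<beta> / 8"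
  have \<rho>: "\<rho> > 0" "\<rho> < r" "\<rho> \<le> \<beta>/8" using r b by (auto simp: \<rho>_def)
  define w where "w = y' + (\<rho>/r) *\<^sub>R (z - y')"
  have "w - z = (1 - \<rho>/r) *\<^sub>R (y' - z)" by (simp add: w_def algebra_simps)
  hence "dist w z = \<bar>1 - \<rho>/r\<bar> * norm (y' - z)" by (simp add: dist_norm)
  also have "\<dots> = (1 - \<rho>/r) * r" using dz \<rho> r by (simp add: dist_norm norm_minus_commute)
  also have "\<dots> = r - \<rho>" using r by (simp add: field_simps)
  finally have dwz: "dist w z = r - \<rho>" .
  have "w - y' = (\<rho>/r) *\<^sub>R (z - y')" by (simp add: w_def)
  hence "dist w y' = \<bar>\<rho>/r\<bar> * norm (z - y')" by (simp add: dist_norm)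
  also have "\<dots> = (\<rho>/r) * r" using dz \<rho> r by (simp add: dist_norm)
  finally have dwy: "dist w y' = \<rho>" using r by simp
  have "ball w \<rho> \<subseteq> S"
  proof
    fix x assume "x \<in> ball w \<rho>"
    hence "dist z x < r" using dwz dist_triangle[of z x w] by (simp add: dist_commute)
    thus "x \<in> S" using z(1) by auto
  qed
  moreover have "ball w \<rho> \<subseteq> ball c \<beta>"
  proof
    fix x assume "x \<in> ball w \<rho>"
    hence "dist c x < \<beta>" using dwy y'(1) \<rho> dist_triangle[of c x w] dist_triangle[of c w y']
      by (simp add: dist_commute)
    thus "x \<in> ball c \<beta>" by simp
  qed
  ultimately show ?thesis unfolding \<rho>_def by blast
qed

lemma base_meas:
  fixes S :: "(real^2) set"
  assumes "i < n"
  shows "{X \<in> space (uniform_sample S n). dist (X i) d \<le> t} \<in> sets (uniform_sample S n)"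
proof -
  have "(\<lambda>X. X i) \<in> measurable (uniform_sample S n) (uniform_measure lborel S)"
    unfolding uniform_sample_def using assms by (intro measurable_component_singleton) auto
  hence m: "(\<lambda>X. X i) \<in> borel_measurable (uniform_sample S n)"
    by (simp cong: measurable_cong_sets)
  have "(\<lambda>X. dist (X i) d) \<in> borel_measurable (uniform_sample S n)"
    using m by measurable
  thus ?thesis by measurable
qed

lemma good_meas:
  fixes S :: "(real^2) set"
  assumes S: "compact S" and \<alpha>: "\<alpha> > 0"
  shows "{X \<in> space (uniform_sample S n). \<forall>c\<in>S. \<exists>i<n. X i \<in> ball c \<alpha>} \<in> sets (uniform_sample S n)"
proof -
  let ?M = "uniform_sample S n"
  obtain T where T: "countable T" "T \<subseteq> S" "S \<subseteq> closure T" using separable by blast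
  let ?P = "\<lambda>X m. \<forall>d\<in>T. \<exists>i\<in>{..<n}. dist (X i) d \<le> \<alpha> - 1 / real (Suc m)"
  have eq: "{X \<in> space ?M. \<forall>c\<in>S. \<exists>i<n. X i \<in> ball c \<alpha>} = {X \<in> space ?M. \<exists>m. ?P X m}"
  proof (intro Collect_cong conj_cong refl iffI)
    fix X assume H: "\<forall>c\<in>S. \<exists>i<n. X i \<in> ball c \<alpha>"
    have cov: "S \<subseteq> \<Union> ((\<lambda>i. ball (X i) \<alpha>) ` {..<n})" proof
      fix x assume "x \<in> S"
      then obtain i where "i < n" "X i \<in> ball x \<alpha>" using H by blast
      thus "x \<in> \<Union> ((\<lambda>i. ball (X i) \<alpha>) ` {..<n})" by (auto simp: dist_commute)
    qed
    have opn: "\<And>G. G \<in> (\<lambda>i. ball (X i) \<alpha>) ` {..<n} \<Longrightarrow> open G" by auto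
    obtain e where e: "e > 0" "\<And>x. x \<in> S \<Longrightarrow> \<exists>G\<in>(\<lambda>i. ball (X i) \<alpha>) ` {..<n}. ball x e \<subseteq> G"
      using Heine_Borel_lemma[OF S cov opn] by blast
    obtain m where "inverse (real (Suc m)) < e" using reals_Archimedean[OF e(1)] by blast
    hence m: "1 / real (Suc m) < e" by (simp add: inverse_eq_divide)
    show "\<exists>m. ?P X m"
    proof (intro exI[of _ m] ballI)
      fix d assume "d \<in> T"
      then obtain i where i: "i < n" "ball d e \<subseteq> ball (X i) \<alpha>" using e(2) T(2) by blast
      hence "dist d (X i) + e \<le> \<alpha>" using e(1) by (simp add: ball_subset_ball_iff)
      thus "\<exists>i\<in>{..<n}. dist (X i) d \<le> \<alpha> - 1 / real (Suc m)" using i m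
        by (intro bexI[of _ i]) (auto simp: dist_commute)
    qed
  next
    fix X assume "\<exists>m. ?P X m"
    then obtain m where m: "?P X m" by blast
    show "\<forall>c\<in>S. \<exists>i<n. X i \<in> ball c \<alpha>"
    proof
      fix c assume "c \<in> S"
      hence "c \<in> closure T" using T by auto
      then obtain d where d: "d \<in> T" "dist d c < 1 / real (Suc m)"
        unfolding closure_approachable by (meson of_nat_0_less_iff zero_less_Suc zero_less_divide_1_iff)
      then obtain i where "i < n" "dist (X i) d \<le> \<alpha> - 1 / real (Suc m)" using m by blast
      hence "dist c (X i) < \<alpha>" using d dist_triangle[of c "X i" d] by (simp add: dist_commute)
      thus "\<exists>i<n. X i \<in> ball c \<alpha>" using \<open>i < n\<close> by auto
    qed
  qed
  have "{X \<in> space ?M. \<exists>m. ?P X m} \<in> sets ?M"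
  proof (rule sets.sets_Collect_countable_Ex)
    fix m
    have fin: "{X \<in> space ?M. \<exists>i\<in>{..<n}. dist (X i) d \<le> \<alpha> - 1 / real (Suc m)} \<in> sets ?M" for d
      by (rule sets.sets_Collect_finite_Ex) (auto intro: base_meas)
    have "{X \<in> space ?M. \<exists>d\<in>T. \<not> (\<exists>i\<in>{..<n}. dist (X i) d \<le> \<alpha> - 1 / real (Suc m))} \<in> sets ?M"
      by (rule sets.sets_Collect_countable_Ex'[OF _ T(1)]) (rule sets.sets_Collect_neg[OF fin])
    hence "space ?M - {X \<in> space ?M. \<exists>d\<in>T. \<not> (\<exists>i\<in>{..<n}. dist (X i) d \<le> \<alpha> - 1 / real (Suc m))} \<in> sets ?M"
      by auto
    also have "space ?M - {X \<in> space ?M. \<exists>d\<in>T. \<not> (\<exists>i\<in>{..<n}. dist (X i) d \<le> \<alpha> - 1 / real (Suc m))} = {X \<in> space ?M. ?P X m}"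
      by auto
    finally show "{X \<in> space ?M. ?P X m} \<in> sets ?M" .
  qed
  thus ?thesis using eq by simp
qed


lemma prob_E:
  fixes S :: "(real^2) set" and B :: "(real^2) set"
  assumes U: "prob_space (uniform_measure lborel S)" and B: "B \<in> sets borel"
  shows "{X \<in> space (uniform_sample S n). \<forall>i<n. X i \<notin> B} \<in> sets (uniform_sample S n)"
    and "measure (uniform_sample S n) {X \<in> space (uniform_sample S n). \<forall>i<n. X i \<notin> B}
           = (1 - measure (uniform_measure lborel S) B) ^ n"
proof -
  let ?U = "uniform_measure lborel S"
  interpret P: finite_product_prob_space "\<lambda>_. ?U" "{..<n}"
    by (intro finite_product_prob_space.intro finite_product_sigma_finite.intro product_prob_space.intro
        product_sigma_finite.intro finite_product_sigma_finite_axioms.intro product_prob_space_axioms.intro)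
       (auto intro: prob_space_imp_sigma_finite U)
  interpret U: prob_space ?U by (rule U)
  have eq: "{X \<in> space (uniform_sample S n). \<forall>i<n. X i \<notin> B} = Pi\<^sub>E {..<n} (\<lambda>_. space ?U - B)"
    by (auto simp: uniform_sample_def space_PiM PiE_def Pi_def)
  show "{X \<in> space (uniform_sample S n). \<forall>i<n. X i \<notin> B} \<in> sets (uniform_sample S n)"
  proof -
    have "Pi\<^sub>E {..<n} (\<lambda>_. space ?U - B) \<in> sets (uniform_sample S n)"
      unfolding uniform_sample_def using B by (intro sets_PiM_I_finite) auto
    thus ?thesis by (simp only: eq)
  qed
  have "measure (uniform_sample S n) {X \<in> space (uniform_sample S n). \<forall>i<n. X i \<notin> B}
      = (\<Prod>i\<in>{..<n}. measure ?U (space ?U - B))"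
  proof -
    have "measure (uniform_sample S n) (Pi\<^sub>E {..<n} (\<lambda>_. space ?U - B)) = (\<Prod>i\<in>{..<n}. measure ?U (space ?U - B))"
      unfolding uniform_sample_def using B by (intro P.finite_measure_PiM_emb) auto
    thus ?thesis by (simp only: eq)
  qed
  also have "\<dots> = (1 - measure ?U B) ^ n"
    using B prob_space.prob_compl[OF U, of B] by simp
  finally show "measure (uniform_sample S n) {X \<in> space (uniform_sample S n). \<forall>i<n. X i \<notin> B}
           = (1 - measure (uniform_measure lborel S) B) ^ n" .
qed

lemma floor_rem:
  fixes t \<delta> :: real
  assumes "\<delta> > 0"
  shows "0 \<le> t - \<delta> * of_int \<lfloor>t / \<delta>\<rfloor>" "t - \<delta> * of_int \<lfloor>t / \<delta>\<rfloor> < \<delta>"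
proof -
  have a: "of_int \<lfloor>t / \<delta>\<rfloor> \<le> t / \<delta>" "t / \<delta> < of_int \<lfloor>t / \<delta>\<rfloor> + 1" by linarith+
  from mult_right_mono[OF a(1), of \<delta>] assms show "0 \<le> t - \<delta> * of_int \<lfloor>t / \<delta>\<rfloor>"
    by (simp add: field_simps)
  from mult_strict_right_mono[OF a(2) assms] assms show "t - \<delta> * of_int \<lfloor>t / \<delta>\<rfloor> < \<delta>"
    by (simp add: field_simps)
qed


theorem proposition1:
  fixes \<alpha> r D :: real
  assumes "\<alpha> > 0" and "r > 0"
  shows "\<exists>A>0. \<forall>S :: (real^2) set.
           compact S \<and> S \<noteq> {} \<and> rolling_condition r S \<and> rolling_condition r (- S)
           \<and> diameter S = D \<longrightarrow>
           (\<forall>n\<ge>1. measure (uniform_sample S n)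
                     {X \<in> space (uniform_sample S n).
                        \<forall>c\<in>S. \<exists>i<n. X i \<in> ball c \<alpha>}
                   \<ge> 1 - A * exp (- real n / A))"
proof -
  note \<alpha> = assms(1) and r = assms(2)
  define \<beta> where "\<beta> = \<alpha>/2"
  define \<rho> where "\<rho> = min r \<beta> / 8"
  define \<delta> where "\<delta> = \<alpha>/8"
  define M where "M = \<lceil>D/\<delta>\<rceil>"
  define K where "K = (Pi\<^sub>E (UNIV::2 set) (\<lambda>_. {-M-1..M}))"
  define V where "V = measure lborel (cball (0::real^2) D)"
  define vb where "vb = measure lborel (ball (0::real^2) \<rho>)"
  define q where "q = vb / V"
  define A where "A = max (real (card K)) (1/q) + 1"
  have \<beta>: "\<beta> > 0" and \<delta>: "\<delta> > 0" using \<alpha> by (auto simp: \<beta>_def \<delta>_def)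
  have \<rho>: "\<rho> > 0" using r \<beta> by (simp add: \<rho>_def)
  have fK: "finite K" unfolding K_def by (intro finite_PiE) auto
  have A1: "A \<ge> real (card K) + 1" "A \<ge> 1/q + 1" by (auto simp: A_def)
  hence Apos: "A > 0" by (smt (verit) of_nat_0_le_iff)
  show ?thesis
  proof (intro exI[of _ A] conjI allI impI Apos)
    fix S :: "(real^2) set" and n :: nat
    assume H: "compact S \<and> S \<noteq> {} \<and> rolling_condition r S \<and> rolling_condition r (- S) \<and> diameter S = D"
      and n: "n \<ge> 1"
    hence S: "compact S" "S \<noteq> {}" and roll: "rolling_condition r (- S)" and DS: "diameter S = D" by auto
    obtain s0 where s0: "s0 \<in> S" using S by blast
    have bS: "bounded S" using S compact_imp_bounded by blast
    have Sc: "S \<subseteq> cball s0 D"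
      using diameter_bounded_bound[OF bS s0] DS by (auto simp: mem_cball)
    have D0: "D \<ge> 0" using Sc s0 by (auto simp: mem_cball)
    have Sb: "S \<in> sets lborel" using S by (simp add: compact_imp_closed borel_closed)
    have ball_meas: "measure lborel (ball x \<rho>) = vb" for x :: "real^2"
      using content_ball[of \<rho> x] content_ball[of \<rho> "0::real^2"] \<rho> by (simp add: vb_def)
    have cb: "measure lborel (cball s0 D) = V"
      using content_cball[of D s0] content_cball[of D "0::real^2"] D0 by (simp add: V_def)
    have fS: "S \<in> fmeasurable lborel" using S by (simp add: fmeasurable_compact)
    have vbpos: "vb > 0" using \<rho> by (simp add: vb_def)
    have inner: "\<exists>w. ball w \<rho> \<subseteq> S \<inter> ball c \<beta>" if "c \<in> S" for c
      using inner_ball[OF roll r \<beta> that] by (simp add: \<rho>_def)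
    obtain w0 where w0: "ball w0 \<rho> \<subseteq> S \<inter> ball s0 \<beta>" using inner[OF s0] by blast
    have mS_ge: "vb \<le> measure lborel S"
      using measure_mono_fmeasurable[of "ball w0 \<rho>" S lborel] w0 fS ball_meas[of w0] by auto
    have mS_le: "measure lborel S \<le> V"
      using measure_mono_fmeasurable[OF Sc Sb] cb by (simp add: fmeasurable_compact)
    have eS: "emeasure lborel S \<noteq> 0" "emeasure lborel S \<noteq> \<infinity>"
      using emeasure_eq_measure2[OF fS] mS_ge vbpos by auto
    let ?U = "uniform_measure lborel S"
    have U: "prob_space ?U" by (rule prob_space_uniform_measure[OF eS])
    have qpos: "q > 0" using vbpos mS_ge mS_le by (simp add: q_def)
    have q1: "q \<le> 1" using vbpos mS_ge mS_le by (simp add: q_def)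
    have pB: "measure ?U (ball c \<beta>) \<ge> q" if c: "c \<in> S" for c
    proof -
      obtain w where w: "ball w \<rho> \<subseteq> S \<inter> ball c \<beta>" using inner[OF c] by blast
      have "vb \<le> measure lborel (S \<inter> ball c \<beta>)"
        using measure_mono_fmeasurable[OF w, of lborel] ball_meas[of w] fmeasurable_Int_fmeasurable[OF fS, of "ball c \<beta>"]
        by simp
      hence "vb / measure lborel S \<le> measure lborel (S \<inter> ball c \<beta>) / measure lborel S"
        using mS_ge vbpos by (simp add: divide_right_mono)
      moreover have "q \<le> vb / measure lborel S"
        unfolding q_def using mS_ge mS_le vbpos by (intro divide_left_mono) auto
      moreover have "measure ?U (ball c \<beta>) = measure lborel (S \<inter> ball c \<beta>) / measure lborel S"
        by (rule measure_uniform_measure[OF eS]) simp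
      ultimately show ?thesis by linarith
    qed
    define g where "g k = (\<chi> j. s0$j + \<delta> * of_int (k j))" for k :: "2 \<Rightarrow> int"
    define K' where "K' = {k\<in>K. \<exists>s\<in>S. dist (g k) s < \<alpha>/4}"
    define cc where "cc k = (SOME s. s \<in> S \<and> dist (g k) s < \<alpha>/4)" for k
    have cc: "cc k \<in> S \<and> dist (g k) (cc k) < \<alpha>/4" if "k \<in> K'" for k
      unfolding cc_def by (rule someI_ex) (use that in \<open>auto simp: K'_def\<close>)
    have fK': "finite K'" using fK by (simp add: K'_def)
    have cK': "card K' \<le> card K" using fK by (intro card_mono) (auto simp: K'_def)
    define E where "E k = {X \<in> space (uniform_sample S n). \<forall>i<n. X i \<notin> ball (cc k) \<beta>}" for k
    have Esets: "E k \<in> sets (uniform_sample S n)" for k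
      unfolding E_def by (rule prob_E(1)[OF U]) simp
    have Emeas: "measure (uniform_sample S n) (E k) \<le> (1 - q) ^ n" if "k \<in> K'" for k
    proof -
      have "measure (uniform_sample S n) (E k) = (1 - measure ?U (ball (cc k) \<beta>)) ^ n"
        unfolding E_def by (rule prob_E(2)[OF U]) simp
      also have "\<dots> \<le> (1 - q) ^ n"
        using pB[of "cc k"] cc[OF that] prob_space.prob_le_1[OF U, of "ball (cc k) \<beta>"]
        by (intro power_mono) auto
      finally show ?thesis .
    qed
    let ?G = "{X \<in> space (uniform_sample S n). \<forall>c\<in>S. \<exists>i<n. X i \<in> ball c \<alpha>}"
    have sub: "space (uniform_sample S n) - (\<Union>k\<in>K'. E k) \<subseteq> ?G"
    proof (safe)
      fix X c assume X: "X \<in> space (uniform_sample S n)" "X \<notin> (\<Union>k\<in>K'. E k)" and c: "c \<in> S"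
      show "\<exists>i<n. X i \<in> ball c \<alpha>"
      proof (rule ccontr)
        assume nc: "\<not> (\<exists>i<n. X i \<in> ball c \<alpha>)"
        define k where "k = (\<lambda>j. \<lfloor>(c$j - s0$j) / \<delta>\<rfloor>)"
        have "k j \<in> {-M-1..M}" for j
        proof -
          have "\<bar>c$j - s0$j\<bar> \<le> D"
            using component_le_norm_cart[of "c - s0" j] Sc c by (auto simp: mem_cball dist_norm norm_minus_commute)
          hence "-D \<le> c$j - s0$j" "c$j - s0$j \<le> D" by linarith+
          hence "-D/\<delta> \<le> (c$j - s0$j) / \<delta>" "(c$j - s0$j) / \<delta> \<le> D/\<delta>"
            using \<delta> divide_right_mono[of "-D" "c$j - s0$j" \<delta>] divide_right_mono[of "c$j - s0$j" D \<delta>] by simp_all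
          thus ?thesis unfolding k_def M_def by (simp add: le_floor_iff) linarith
        qed
        hence kK: "k \<in> K" by (auto simp: K_def)
        have "norm (c - g k) \<le> (\<Sum>j\<in>UNIV. \<bar>(c - g k)$j\<bar>)" by (rule norm_le_l1_cart)
        also have "\<dots> < (\<Sum>j\<in>(UNIV::2 set). \<delta>)"
        proof (rule sum_strict_mono)
          fix j :: 2
          have "(c - g k)$j = (c$j - s0$j) - \<delta> * of_int \<lfloor>(c$j - s0$j) / \<delta>\<rfloor>"
            by (simp add: g_def k_def)
          thus "\<bar>(c - g k)$j\<bar> < \<delta>" using floor_rem[OF \<delta>, of "c$j - s0$j"] by simp
        qed auto
        also have "\<dots> = \<alpha>/4" by (simp add: \<delta>_def)
        finally have dk: "dist (g k) c < \<alpha>/4" by (simp add: dist_norm norm_minus_commute)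
        hence kK': "k \<in> K'" using kK c by (auto simp: K'_def)
        have "dist c (cc k) < \<beta>" using cc[OF kK'] dk dist_triangle[of c "cc k" "g k"]
          by (simp add: \<beta>_def dist_commute)
        have "ball (cc k) \<beta> \<subseteq> ball c \<alpha>"
        proof
          fix x assume "x \<in> ball (cc k) \<beta>"
          thus "x \<in> ball c \<alpha>" using \<open>dist c (cc k) < \<beta>\<close> dist_triangle[of c x "cc k"]
            by (simp add: \<beta>_def)
        qed
        hence "X \<in> E k" using nc X(1) by (auto simp: E_def)
        thus False using X(2) kK' by blast
      qed
    qed
    have Gsets: "?G \<in> sets (uniform_sample S n)" by (rule good_meas[OF S(1) \<alpha>])
    have PM: "prob_space (uniform_sample S n)"
      unfolding uniform_sample_def by (intro prob_space_PiM U)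
    have UE: "(\<Union>k\<in>K'. E k) \<in> sets (uniform_sample S n)" using fK' Esets by auto
    have "measure (uniform_sample S n) (\<Union>k\<in>K'. E k) \<le> (\<Sum>k\<in>K'. measure (uniform_sample S n) (E k))"
      by (rule measure_UNION_le[OF fK']) (rule Esets)
    also have "\<dots> \<le> (\<Sum>k\<in>K'. (1 - q) ^ n)" by (intro sum_mono Emeas)
    also have "\<dots> = real (card K') * (1 - q) ^ n" by simp
    also have "\<dots> \<le> real (card K) * exp (- q * real n)"
    proof (intro mult_mono)
      show "real (card K') \<le> real (card K)" using cK' by simp
      have "(1 - q) ^ n \<le> exp (- q) ^ n" using q1 exp_ge_add_one_self[of "-q"] by (intro power_mono) auto
      also have "\<dots> = exp (- q * real n)" using exp_of_nat_mult[of n "-q"] by (simp add: mult.commute)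
      finally show "(1 - q) ^ n \<le> exp (- q * real n)" .
    qed (use q1 in auto)
    also have "\<dots> \<le> A * exp (- real n / A)"
    proof (intro mult_mono)
      show "real (card K) \<le> A" using A1 by linarith
      have "1/A \<le> q"
      proof -
        have "1/q < A" using A1 by linarith
        hence "1 < A * q" using qpos by (simp add: field_simps)
        thus ?thesis using Apos by (simp add: field_simps)
      qed
      hence "1/A * real n \<le> q * real n" by (intro mult_right_mono) auto
      hence "real n / A \<le> q * real n" by simp
      thus "exp (- q * real n) \<le> exp (- real n / A)" by simp
    qed (use Apos in auto)
    finally have bnd: "measure (uniform_sample S n) (\<Union>k\<in>K'. E k) \<le> A * exp (- real n / A)" .
    have "1 - A * exp (- real n / A) \<le> measure (uniform_sample S n) (space (uniform_sample S n) - (\<Union>k\<in>K'. E k))"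
      using prob_space.prob_compl[OF PM UE] bnd by simp
    also have "\<dots> \<le> measure (uniform_sample S n) ?G"
      using finite_measure.finite_measure_mono[OF prob_space.axioms(1)[OF PM] sub Gsets] .
    finally show "1 - A * exp (- real n / A) \<le> measure (uniform_sample S n) ?G" .
  qed
qed

end
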